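(* Assume the setting in the context (deterministic $\Phi$ with $\operatorname{rank}(\widehat\Phi_1)=k$). Then for $i=1,\dots,k$, $$\sin\angle(\mathcal R(Q),\mathcal R(u_i))\le\frac{\delta_i^{2q+2}\|\widehat\Phi_2\widehat\Phi_1^\dagger\|_2}{\sqrt{1+\gamma^{4q+4}\|\widehat\Phi_2\widehat\Phi_1^\dagger\|_2^2}},\qquad \sin\angle(\mathcal R(P),\mathcal R(v_i))\le\frac{\delta_i^{2q+1}\|\widehat\Phi_2\widehat\Phi_1^\dagger\|_2}{\sqrt{1+\gamma^{4q+2}\|\widehat\Phi_2\widehat\Phi_1^\dagger\|_2^2}},$$ where $\angle(\mathcal X,\mathrm{span}\{x\})$ denotes the angle between the unit vector $x$ and the subspace $\mathcal X$, i.e. $\sin\angle=\|(I-\Pi_{\mathcal X})x\|_2$ with $\Pi_{\mathcal X}$ the orthogonal projector onto $\mathcal X$.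
   Context: Let $A\in\mathbb R^{m\times n}$ with $m\ge n$ have full SVD $A=U\Sigma V^T$, with singular values $\sigma_1\ge\sigma_2\ge\dots\ge\sigma_n\ge 0$. Fix an integer $k\ge1$ with $\sigma_k>0$ (the paper regards $A$ as having numerical rank $k$, i.e. $\sigma_k$ well separated from $\sigma_{k+1}$). Write $U=[U_k\ U_\perp]$ with $U_k\in\mathbb R^{m\times k}$ the first $k$ left singular vectors $u_1,\dots,u_k$, $U_\perp\in\mathbb R^{m\times(m-k)}$ the rest; $V=[V_k\ V_\perp]$ with $V_k\in\mathbb R^{n\times k}$ the first $k$ right singular vectors $v_1,\dots,v_k$; $\Sigma_k=\mathrm{diag}(\sigma_1,\dots,\sigma_k)$ and $\Sigma_\perp$ the remaining diagonal block of $\Sigma$ containing $\sigma_{k+1},\dots,\sigma_n$ (so $\|\Sigma_\perp\|_2=\sigma_{k+1}$, $\|\Sigma_\perp\|_F=(\sum_{i>k}\sigma_i^2)^{1/2}$). The notation $\|\cdot\|_{2,F}$ means the statement holds for both the spectral and Frobenius norm. Let $p\ge1$ be an oversampling integer, $d=k+p<n$, and $q\ge0$ an integer (power-iteration parameter). RU-QLP (Randomized Unpivoted QLP): given $\Phi\in\mathbb R^{m\times d}$, let $\bar P\in\mathbb R^{n\times d}$ have orthonormal columns spanning the range of $(A^TA)^qA^T\Phi$ (assumed of rank $d$); compute the thin unpivoted QR factorization $A\bar P=QR$ with $Q\in\mathbb R^{m\times d}$ having orthonormal columns and $R\in\mathbb R^{d\times d}$ upper triangular; compute the thin unpivoted QR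 factorization $R^T=\widetilde P\widetilde R$; set $P=\bar P\widetilde P\in\mathbb R^{n\times d}$ and $L=\widetilde R^T$ (lower triangular), giving $\hat A=QLP^T$. Partition $R=\begin{bmatrix}R_{11}&R_{12}\\0&R_{22}\end{bmatrix}$ and $L=\begin{bmatrix}L_{11}&0\\L_{21}&L_{22}\end{bmatrix}$ with $R_{11},L_{11}\in\mathbb R^{k\times k}$. Define $\widehat\Phi_1=U_k^T\Phi\in\mathbb R^{k\times d}$ and $\widehat\Phi_2=U_\perp^T\Phi\in\mathbb R^{(m-k)\times d}$, assume $\widehat\Phi_1$ has rank $k$, and let $\dagger$ denote the Moore–Penrose inverse. Set $\delta_i=\sigma_{k+1}/\sigma_i$ for $i=1,\dots,k$ and $\gamma=\sigma_n/\sigma_1$. *)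

theory Defs
  imports "Jordan_Normal_Form.Matrix" "Jordan_Normal_Form.DL_Rank"
begin

definition vnorm :: "real vec \<Rightarrow> real" where
  "vnorm x = sqrt (x \<bullet> x)"

definition spec_norm :: "real mat \<Rightarrow> real" where
  "spec_norm A = Sup {vnorm (A *\<^sub>v x) | x. x \<in> carrier_vec (dim_col A) \<and> vnorm x = 1}"

definition col_space :: "real mat \<Rightarrow> real vec set" where
  "col_space A = {A *\<^sub>v x | x. x \<in> carrier_vec (dim_col A)}"

definition orthonormal_cols :: "real mat \<Rightarrow> bool" where
  "orthonormal_cols A \<longleftrightarrow> transpose_mat A * A = 1\<^sub>m (dim_col A)"

definition is_pinv :: "real mat \<Rightarrow> real mat \<Rightarrow> bool" where
  "is_pinv A X \<longleftrightarrow> X \<in> carrier_mat (dim_col A) (dim_row A) \<and>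
     A * X * A = A \<and> X * A * X = X \<and>
     transpose_mat (A * X) = A * X \<and> transpose_mat (X * A) = X * A"

definition pinv :: "real mat \<Rightarrow> real mat" where
  "pinv A = (THE X. is_pinv A X)"

definition orth_proj :: "real vec set \<Rightarrow> real vec \<Rightarrow> real vec" where
  "orth_proj S x = (THE y. y \<in> S \<and> (\<forall>z\<in>S. (x - y) \<bullet> z = 0))"

definition sin_angle :: "real vec set \<Rightarrow> real vec \<Rightarrow> real" where
  "sin_angle S x = vnorm (x - orth_proj S x)"

definition first_cols :: "nat \<Rightarrow> real mat \<Rightarrow> real mat" where
  "first_cols k A = mat (dim_row A) k (\<lambda>(i,j). A $$ (i,j))"

definition last_cols :: "nat \<Rightarrow> real mat \<Rightarrow> real mat" where
  "last_cols k A = mat (dim_row A) (dim_col A - k) (\<lambda>(i,j). A $$ (i, j + k))"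

definition rect_diag :: "nat \<Rightarrow> nat \<Rightarrow> (nat \<Rightarrow> real) \<Rightarrow> real mat" where
  "rect_diag m n s = mat m n (\<lambda>(i,j). if i = j then s i else 0)"

end

theory Submission
  imports Defs
begin



lemma sprod_self_nonneg: "(x::real vec) \<bullet> x \<ge> 0"
  unfolding scalar_prod_def by (intro sum_nonneg) auto

lemma sprod_self_zero: assumes "(x::real vec) \<in> carrier_vec r" "x \<bullet> x = 0" shows "x = 0\<^sub>v r"
proof (rule eq_vecI)
  have "\<forall>i\<in>{0..<dim_vec x}. x $ i * x $ i = 0"
    using assms(2) unfolding scalar_prod_def by (subst sum_nonneg_eq_0_iff[symmetric]) auto
  then show "\<And>i. i < dim_vec (0\<^sub>v r) \<Longrightarrow> x $ i = 0\<^sub>v r $ i" using assms(1) by auto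
qed (use assms in auto)

lemma vnorm_sq: "vnorm x ^ 2 = x \<bullet> x"
  unfolding vnorm_def
  apply (rule real_sqrt_pow2)
  using sprod_self_nonneg[of x] 
  apply assumption
  done

lemma vnorm_nonneg: "vnorm x \<ge> 0" unfolding vnorm_def by (rule real_sqrt_ge_zero[OF sprod_self_nonneg])

lemma col_space_mem: "W \<in> carrier_mat r c \<Longrightarrow> a \<in> carrier_vec c \<Longrightarrow> W *\<^sub>v a \<in> col_space W"
  unfolding col_space_def by auto

lemma col_space_smult: assumes "W \<in> carrier_mat r c" "y \<in> col_space W" shows "s \<cdot>\<^sub>v y \<in> col_space W"
proof -
  obtain a where a: "a \<in> carrier_vec c" "y = W *\<^sub>v a" using assms unfolding col_space_def by auto
  have "s \<cdot>\<^sub>v y = W *\<^sub>v (s \<cdot>\<^sub>v a)" using a assms(1) mult_mat_vec by metis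
  thus ?thesis using a assms col_space_mem by auto
qed

lemma orth_proj_eq:
  assumes W: "W \<in> carrier_mat r c" and orth: "orthonormal_cols W" and x: "x \<in> carrier_vec r"
  shows "orth_proj (col_space W) x = W *\<^sub>v (transpose_mat W *\<^sub>v x)"
proof -
  let ?p = "W *\<^sub>v (transpose_mat W *\<^sub>v x)"
  have WtW: "transpose_mat W * W = 1\<^sub>m c" using orth W unfolding orthonormal_cols_def by auto
  have p: "?p \<in> carrier_vec r" using W x by auto
  have Wt0: "transpose_mat W *\<^sub>v (x - ?p) = 0\<^sub>v c"
  proof -
    have "transpose_mat W *\<^sub>v (x - ?p) = transpose_mat W *\<^sub>v x - transpose_mat W *\<^sub>v ?p"
      using W x p by (intro mult_minus_distrib_mat_vec) auto
    also have "transpose_mat W *\<^sub>v ?p = (transpose_mat W * W) *\<^sub>v (transpose_mat W *\<^sub>v x)"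
      using W x by (subst assoc_mult_mat_vec) auto
    also have "\<dots> = transpose_mat W *\<^sub>v x" using WtW W x by simp
    finally show ?thesis using W x by auto
  qed
  have orthz: "(x - ?p) \<bullet> z = 0" if zS: "z \<in> col_space W" for z
  proof -
    obtain a where a: "a \<in> carrier_vec c" "z = W *\<^sub>v a" using zS unfolding col_space_def using W by auto
    have "(x - ?p) \<bullet> (W *\<^sub>v a) = (transpose_mat W *\<^sub>v (x - ?p)) \<bullet> a"
      using transpose_vec_mult_scalar[OF W a(1), of "x - ?p"] x p by auto
    thus ?thesis using Wt0 a by simp
  qed
  show ?thesis unfolding orth_proj_def
  proof (rule the_equality)
    show "?p \<in> col_space W \<and> (\<forall>z\<in>col_space W. (x - ?p) \<bullet> z = 0)"
      using orthz col_space_mem[OF W] W x by auto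
  next
    fix y assume y: "y \<in> col_space W \<and> (\<forall>z\<in>col_space W. (x - y) \<bullet> z = 0)"
    obtain a where a: "a \<in> carrier_vec c" "y = W *\<^sub>v a" using y unfolding col_space_def using W by auto
    let ?b = "transpose_mat W *\<^sub>v x"
    have yc: "y \<in> carrier_vec r" using a W by auto
    have d: "y - ?p = W *\<^sub>v (a - ?b)" using a W x by (subst mult_minus_distrib_mat_vec) auto
    have dS: "y - ?p \<in> col_space W" unfolding d using W a x by (intro col_space_mem) auto
    have e1: "(x - y) \<bullet> (y - ?p) = 0" using y dS by auto
    have e2: "(x - ?p) \<bullet> (y - ?p) = 0" using orthz dS by auto
    have "(y - ?p) = (x - ?p) - (x - y)" using x yc p W by (intro eq_vecI; simp)
    hence "(y - ?p) \<bullet> (y - ?p) = (x - ?p) \<bullet> (y - ?p) - (x - y) \<bullet> (y - ?p)"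
      using x yc p by (metis minus_carrier_vec minus_scalar_prod_distrib)
    hence "(y - ?p) \<bullet> (y - ?p) = 0" using e1 e2 by simp
    hence yp0: "y - ?p = 0\<^sub>v r" using sprod_self_zero yc p by auto
    show "y = ?p"
    proof (rule eq_vecI)
      fix i assume i: "i < dim_vec ?p"
      have "(y - ?p) $ i = 0" using yp0 i p W by simp
      thus "y $ i = ?p $ i" using yc p i by simp
    qed (use yc p W in simp)
  qed
qed

lemma orth_resid:
  assumes W: "W \<in> carrier_mat r c" and orth: "orthonormal_cols W" and x: "x \<in> carrier_vec r"
    and z: "z \<in> col_space W"
  shows "(x - W *\<^sub>v (transpose_mat W *\<^sub>v x)) \<bullet> z = 0"
proof -
  let ?p = "W *\<^sub>v (transpose_mat W *\<^sub>v x)"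
  have WtW: "transpose_mat W * W = 1\<^sub>m c" using orth W unfolding orthonormal_cols_def by auto
  have p: "?p \<in> carrier_vec r" using W x by auto
  have Wt0: "transpose_mat W *\<^sub>v (x - ?p) = 0\<^sub>v c"
  proof -
    have "transpose_mat W *\<^sub>v (x - ?p) = transpose_mat W *\<^sub>v x - transpose_mat W *\<^sub>v ?p"
      using W x p by (intro mult_minus_distrib_mat_vec) auto
    also have "transpose_mat W *\<^sub>v ?p = (transpose_mat W * W) *\<^sub>v (transpose_mat W *\<^sub>v x)"
      using W x by (subst assoc_mult_mat_vec) auto
    also have "\<dots> = transpose_mat W *\<^sub>v x" using WtW W x by simp
    finally show ?thesis using W x by auto
  qed
  obtain a where a: "a \<in> carrier_vec c" "z = W *\<^sub>v a" using z unfolding col_space_def using W by auto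
  have "(x - ?p) \<bullet> (W *\<^sub>v a) = (transpose_mat W *\<^sub>v (x - ?p)) \<bullet> a"
    using transpose_vec_mult_scalar[OF W a(1), of "x - ?p"] x p by auto
  thus ?thesis using Wt0 a by simp
qed

lemma sin_angle_le:
  assumes W: "W \<in> carrier_mat r c" and orth: "orthonormal_cols W" and x: "x \<in> carrier_vec r"
    and y: "y \<in> col_space W"
  shows "sin_angle (col_space W) x \<le> vnorm (x - y)"
proof -
  let ?p = "W *\<^sub>v (transpose_mat W *\<^sub>v x)"
  have p: "?p \<in> carrier_vec r" using W x by auto
  obtain a where a: "a \<in> carrier_vec c" "y = W *\<^sub>v a" using y unfolding col_space_def using W by auto
  have yc: "y \<in> carrier_vec r" using a W by auto
  have d: "?p - y = W *\<^sub>v (transpose_mat W *\<^sub>v x - a)" using a W x by (subst mult_minus_distrib_mat_vec) auto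
  have dS: "?p - y \<in> col_space W" unfolding d using W a x by (intro col_space_mem) auto
  define u where "u = x - ?p"
  define v where "v = ?p - y"
  have u: "u \<in> carrier_vec r" and v: "v \<in> carrier_vec r" using x p yc unfolding u_def v_def by auto
  have uv: "u \<bullet> v = 0" unfolding u_def v_def using orth_resid[OF W orth x dS] .
  have vu: "v \<bullet> u = 0" using uv comm_scalar_prod[OF u v] by simp
  have xy: "x - y = u + v" unfolding u_def v_def using x p yc W by (intro eq_vecI; simp)
  have "(u + v) \<bullet> (u + v) = u \<bullet> u + u \<bullet> v + (v \<bullet> u + v \<bullet> v)"
    using u v by (simp add: add_scalar_prod_distrib[of _ r] scalar_prod_add_distrib[of _ r])
  hence "u \<bullet> u \<le> (x - y) \<bullet> (x - y)" using uv vu sprod_self_nonneg[of v] xy by simp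
  hence "vnorm u \<le> vnorm (x - y)" unfolding vnorm_def by simp
  thus ?thesis unfolding sin_angle_def orth_proj_eq[OF W orth x] u_def .
qed



lemma orth_norm_pres:
  assumes Om: "Om \<in> carrier_mat r r" "Om * transpose_mat Om = 1\<^sub>m r" and v: "v \<in> carrier_vec r"
  shows "vnorm (transpose_mat Om *\<^sub>v v) = vnorm v"
proof -
  have "(transpose_mat Om *\<^sub>v v) \<bullet> (transpose_mat Om *\<^sub>v v) = v \<bullet> (Om *\<^sub>v (transpose_mat Om *\<^sub>v v))"
    using transpose_vec_mult_scalar[OF Om(1), of "transpose_mat Om *\<^sub>v v" v] Om v by auto
  also have "Om *\<^sub>v (transpose_mat Om *\<^sub>v v) = (Om * transpose_mat Om) *\<^sub>v v" using Om v by (subst assoc_mult_mat_vec) auto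
  also have "\<dots> = v" using Om v by simp
  finally show ?thesis unfolding vnorm_def by simp
qed

lemma angle_core:
  assumes Om: "Om \<in> carrier_mat r r" "transpose_mat Om * Om = 1\<^sub>m r" "Om * transpose_mat Om = 1\<^sub>m r"
    and W: "W \<in> carrier_mat r c" and orth: "orthonormal_cols W" and i: "i < r"
    and y: "y \<in> col_space W" and s: "s > 0" and gi: "(transpose_mat Om *\<^sub>v y) $ i = s"
  shows "sin_angle (col_space W) (col Om i) \<le>
     sqrt ((\<Sum>j\<in>{0..<r}-{i}. ((transpose_mat Om *\<^sub>v y) $ j)^2) / (s^2 + (\<Sum>j\<in>{0..<r}-{i}. ((transpose_mat Om *\<^sub>v y) $ j)^2)))"
proof -
  define g where "g = transpose_mat Om *\<^sub>v y"
  define H where "H = (\<Sum>j\<in>{0..<r}-{i}. (g $ j)^2)"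
  have H0: "H \<ge> 0" unfolding H_def by (intro sum_nonneg) auto
  have sH: "s^2 + H > 0" using s H0 by (simp add: add_pos_nonneg)
  define cc where "cc = s / (s^2 + H)"
  obtain a where a: "a \<in> carrier_vec c" "y = W *\<^sub>v a" using y unfolding col_space_def using W by auto
  have yc: "y \<in> carrier_vec r" using a W by auto
  have g: "g \<in> carrier_vec r" unfolding g_def using Om yc by auto
  have colO: "col Om i \<in> carrier_vec r" using Om i by auto
  have "sin_angle (col_space W) (col Om i) \<le> vnorm (col Om i - cc \<cdot>\<^sub>v y)"
    by (rule sin_angle_le[OF W orth colO col_space_smult[OF W y]])
  also have "\<dots> = vnorm (transpose_mat Om *\<^sub>v (col Om i - cc \<cdot>\<^sub>v y))"
    using orth_norm_pres[OF Om(1) Om(3)] colO yc by auto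
  also have "transpose_mat Om *\<^sub>v (col Om i - cc \<cdot>\<^sub>v y) = unit_vec r i - cc \<cdot>\<^sub>v g"
  proof -
    have "transpose_mat Om *\<^sub>v (col Om i - cc \<cdot>\<^sub>v y) = transpose_mat Om *\<^sub>v col Om i - transpose_mat Om *\<^sub>v (cc \<cdot>\<^sub>v y)"
      using Om colO yc by (intro mult_minus_distrib_mat_vec) auto
    also have "transpose_mat Om *\<^sub>v (cc \<cdot>\<^sub>v y) = cc \<cdot>\<^sub>v g" unfolding g_def using Om yc mult_mat_vec
      by (metis transpose_carrier_mat)
    also have "transpose_mat Om *\<^sub>v col Om i = col (transpose_mat Om * Om) i"
      using Om i by (subst col_mult2) auto
    also have "\<dots> = unit_vec r i" using Om(2) i by simp
    finally show ?thesis .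
  qed
  also have "vnorm (unit_vec r i - cc \<cdot>\<^sub>v g) = sqrt (H / (s^2 + H))"
  proof -
    let ?w = "unit_vec r i - cc \<cdot>\<^sub>v g"
    have "?w \<bullet> ?w = (\<Sum>j\<in>{0..<r}. (?w $ j)^2)" unfolding scalar_prod_def using g
      by (simp add: power2_eq_square)
    also have "\<dots> = (?w $ i)^2 + (\<Sum>j\<in>{0..<r}-{i}. (?w $ j)^2)"
      using i by (subst sum.remove[of _ i]) auto
    also have "(\<Sum>j\<in>{0..<r}-{i}. (?w $ j)^2) = (\<Sum>j\<in>{0..<r}-{i}. cc^2 * (g $ j)^2)"
      using g by (intro sum.cong) (auto simp: power2_eq_square unit_vec_def)
    also have "\<dots> = cc^2 * H" unfolding H_def by (simp add: sum_distrib_left)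
    also have "?w $ i = 1 - cc * s" using g i gi by (simp add: g_def[symmetric])
    finally have ww: "?w \<bullet> ?w = (1 - cc * s)^2 + cc^2 * H" .
    define D where "D = s^2 + H"
    have D: "D > 0" using sH D_def by simp
    have e1: "1 - cc * s = H / D" unfolding cc_def D_def[symmetric] using D D_def
      by (simp add: field_simps power2_eq_square)
    have "(H / D)^2 + (s / D)^2 * H = (H * (s^2 + H)) / D^2"
      by (simp add: power_divide add_divide_distrib algebra_simps power2_eq_square)
    also have "\<dots> = H / D" unfolding D_def[symmetric] using D by (simp add: power2_eq_square)
    finally have "(1 - cc * s)^2 + cc^2 * H = H / (s^2 + H)" using e1 unfolding cc_def D_def by simp
    thus ?thesis using ww unfolding vnorm_def by simp
  qed
  finally show ?thesis unfolding H_def g_def .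
qed





lemma pinv_unique:
  assumes X: "is_pinv A X" and Y: "is_pinv A Y"
  shows "X = Y"
proof -
  define a b where "a = dim_row A" and "b = dim_col A"
  have A: "A \<in> carrier_mat a b" unfolding a_def b_def by auto
  have Xc: "X \<in> carrier_mat b a" and Yc: "Y \<in> carrier_mat b a" using X Y unfolding is_pinv_def a_def b_def by auto
  have X1: "A * X * A = A" and X2: "X * A * X = X" and X3: "transpose_mat (A * X) = A * X"
    and X4: "transpose_mat (X * A) = X * A" using X unfolding is_pinv_def by auto
  have Y1: "A * Y * A = A" and Y2: "Y * A * Y = Y" and Y3: "transpose_mat (A * Y) = A * Y"
    and Y4: "transpose_mat (Y * A) = Y * A" using Y unfolding is_pinv_def by auto
  have At: "transpose_mat A \<in> carrier_mat b a" using A by simp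
  have Xt: "transpose_mat X \<in> carrier_mat a b" using Xc by simp
  have Yt: "transpose_mat Y \<in> carrier_mat a b" using Yc by simp
  have tAX: "transpose_mat (A * X) = transpose_mat X * transpose_mat A" using A Xc by (rule transpose_mult)
  have tAY: "transpose_mat (A * Y) = transpose_mat Y * transpose_mat A" using A Yc by (rule transpose_mult)
  have tXA: "transpose_mat (X * A) = transpose_mat A * transpose_mat X" using Xc A by (rule transpose_mult)
  have tYA: "transpose_mat (Y * A) = transpose_mat A * transpose_mat Y" using Yc A by (rule transpose_mult)
  have tA: "transpose_mat A = transpose_mat A * (transpose_mat Y * transpose_mat A)"
  proof -
    have "transpose_mat A = transpose_mat (A * Y * A)" using Y1 by simp
    also have "\<dots> = transpose_mat A * transpose_mat (A * Y)" using A Yc by (subst transpose_mult[of _ a a]) auto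
    finally show ?thesis using tAY by simp
  qed
  have tA2: "transpose_mat A = (transpose_mat A * transpose_mat Y) * transpose_mat A"
  proof -
    have "transpose_mat A = transpose_mat (A * (Y * A))" using Y1 A Yc by simp
    also have "\<dots> = transpose_mat (Y * A) * transpose_mat A" using A Yc by (subst transpose_mult[of _ a b]) auto
    finally show ?thesis using tYA by simp
  qed
  have a: "A * X = A * Y"
  proof -
    have "A * X = transpose_mat X * transpose_mat A" using X3 tAX by simp
    also have "\<dots> = transpose_mat X * (transpose_mat A * (transpose_mat Y * transpose_mat A))" using tA by simp
    also have "\<dots> = (transpose_mat X * transpose_mat A) * (transpose_mat Y * transpose_mat A)"
      using assoc_mult_mat[OF Xt At mult_carrier_mat[OF Yt At]] by simp
    also have "\<dots> = (A * X) * (A * Y)" using X3 tAX Y3 tAY by simp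
    also have "\<dots> = (A * X * A) * Y" using assoc_mult_mat[OF mult_carrier_mat[OF A Xc] A Yc] by simp
    also have "\<dots> = A * Y" using X1 by simp
    finally show ?thesis .
  qed
  have b: "X * A = Y * A"
  proof -
    have "X * A = transpose_mat A * transpose_mat X" using X4 tXA by simp
    also have "\<dots> = ((transpose_mat A * transpose_mat Y) * transpose_mat A) * transpose_mat X" using tA2 by simp
    also have "\<dots> = (transpose_mat A * transpose_mat Y) * (transpose_mat A * transpose_mat X)"
      using assoc_mult_mat[OF mult_carrier_mat[OF At Yt] At Xt] by simp
    also have "\<dots> = (Y * A) * (X * A)" using X4 tXA Y4 tYA by simp
    also have "\<dots> = Y * (A * X * A)" using assoc_mult_mat[OF Yc A mult_carrier_mat[OF Xc A]] assoc_mult_mat[OF A Xc A] by simp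
    also have "\<dots> = Y * A" using X1 by simp
    finally show ?thesis .
  qed
  have "X = X * A * X" using X2 by simp
  also have "\<dots> = X * (A * Y)" using A Xc a by simp
  also have "\<dots> = (Y * A) * Y" using A Xc Yc b by (metis assoc_mult_mat)
  also have "\<dots> = Y" using Y2 by simp
  finally show ?thesis .
qed



lemma surj_of_rank:
  assumes F: "F \<in> carrier_mat k d" and rk: "vec_space.rank k F = k" and y: "(y::real vec) \<in> carrier_vec k"
  shows "\<exists>x \<in> carrier_vec d. F *\<^sub>v x = y"
proof -
  interpret V: vec_space "TYPE(real)" k .
  obtain S where fS: "finite S" and max: "maximal S (\<lambda>T. T \<subseteq> set (cols F) \<and> V.lin_indpt T)"
    using maximal_exists[of "(\<lambda>T. T \<subseteq> set (cols F) \<and> V.lin_indpt T)" "card (set (cols F))" "{}"]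
    by (meson List.finite_set card_mono empty_iff empty_subsetI V.finite_lin_indpt2 rev_finite_subset)
  have cS: "card S = k" using V.rank_card_indpt[OF F max] rk by simp
  have Ssub: "S \<subseteq> set (cols F)" and li: "V.lin_indpt S" using max unfolding maximal_def by auto
  have colsc: "set (cols F) \<subseteq> carrier_vec k" using F cols_dim by blast
  have Sc: "S \<subseteq> carrier V.V" using Ssub colsc by auto
  have "V.basis S" by (rule V.dim_li_is_basis) (use fS Sc li cS V.dim_is_n in auto)
  hence spanS: "V.span S = carrier_vec k" unfolding V.basis_def by auto
  have "V.span S \<subseteq> V.span (set (cols F))" using Ssub colsc by (intro V.span_is_monotone) auto
  hence "y \<in> V.col_space F" using spanS y unfolding V.col_space_def by auto
  thus ?thesis unfolding V.col_space_eq[OF F] using F by auto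
qed

lemma pinv_right_inverse:
  assumes F: "F \<in> carrier_mat k d" and surj: "\<And>y. (y::real vec) \<in> carrier_vec k \<Longrightarrow> \<exists>x \<in> carrier_vec d. F *\<^sub>v x = y"
  shows "F * pinv F = 1\<^sub>m k \<and> pinv F \<in> carrier_mat d k"
proof -
  define G where "G = F * transpose_mat F"
  have Gc: "G \<in> carrier_mat k k" unfolding G_def using F by auto
  have inj: "y = 0\<^sub>v k" if yc: "y \<in> carrier_vec k" and Gy: "G *\<^sub>v y = 0\<^sub>v k" for y
  proof -
    have Fty: "transpose_mat F *\<^sub>v y \<in> carrier_vec d" using F yc by auto
    have "(transpose_mat F *\<^sub>v y) \<bullet> (transpose_mat F *\<^sub>v y) = y \<bullet> (F *\<^sub>v (transpose_mat F *\<^sub>v y))"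
      using transpose_vec_mult_scalar[OF F Fty yc] .
    also have "F *\<^sub>v (transpose_mat F *\<^sub>v y) = G *\<^sub>v y" unfolding G_def using F yc by (subst assoc_mult_mat_vec) auto
    finally have "(transpose_mat F *\<^sub>v y) \<bullet> (transpose_mat F *\<^sub>v y) = 0" using Gy yc by simp
    hence Fty0: "transpose_mat F *\<^sub>v y = 0\<^sub>v d" using sprod_self_zero[OF Fty] by simp
    obtain x where x: "x \<in> carrier_vec d" "F *\<^sub>v x = y" using surj yc by blast
    have "y \<bullet> y = (transpose_mat F *\<^sub>v y) \<bullet> x"
      using transpose_vec_mult_scalar[OF F x(1) yc] x by simp
    hence yy: "y \<bullet> y = 0" using Fty0 x by simp
    show ?thesis using sprod_self_zero[OF yc yy] .
  qed
  have "det G \<noteq> 0" using det_0_iff_vec_prod_zero_field[OF Gc] inj by auto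
  from det_non_zero_imp_unit[OF Gc this, of "()"]
  obtain B where Bc: "B \<in> carrier_mat k k" and BG: "B * G = 1\<^sub>m k" and GB: "G * B = 1\<^sub>m k"
    unfolding Units_def ring_mat_def by auto
  have Gt: "transpose_mat G = G" unfolding G_def using F by (subst transpose_mult[of _ k d]) auto
  have Bt: "transpose_mat B = B"
  proof -
    have "transpose_mat (B * G) = 1\<^sub>m k" using BG by simp
    hence GBt: "G * transpose_mat B = 1\<^sub>m k" using Bc Gc Gt by (subst (asm) transpose_mult[of _ k k]) auto
    have "transpose_mat B = (B * G) * transpose_mat B" using BG Bc by simp
    also have "\<dots> = B * (G * transpose_mat B)" using Bc Gc by (subst assoc_mult_mat[of _ k k]) auto
    also have "\<dots> = B" using GBt Bc by simp
    finally show ?thesis .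
  qed
  define X where "X = transpose_mat F * B"
  have Xc: "X \<in> carrier_mat d k" unfolding X_def using F Bc by auto
  have FX: "F * X = 1\<^sub>m k" unfolding X_def using F Bc GB G_def by (subst assoc_mult_mat[symmetric, of _ k d]) auto
  have pX: "is_pinv F X"
    unfolding is_pinv_def
  proof (intro conjI)
    show "X \<in> carrier_mat (dim_col F) (dim_row F)" using Xc F by auto
    show "F * X * F = F" using FX F by simp
    show "X * F * X = X" using FX F Xc by (subst assoc_mult_mat[of _ d k]) auto
    show "transpose_mat (F * X) = F * X" using FX by simp
    have "transpose_mat (X * F) = transpose_mat F * transpose_mat X" using Xc F by (rule transpose_mult)
    also have "transpose_mat X = transpose_mat B * F" unfolding X_def using F Bc
      by (subst transpose_mult[of _ d k]) auto
    also have "transpose_mat F * (transpose_mat B * F) = X * F" unfolding Bt X_def using F Bc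
      by (subst assoc_mult_mat[of _ d k]) auto
    finally show "transpose_mat (X * F) = X * F" .
  qed
  have "pinv F = X" unfolding pinv_def using pX pinv_unique by blast
  thus ?thesis using FX Xc by simp
qed



lemma rect_diag_carrier[simp]: "rect_diag a b f \<in> carrier_mat a b"
  unfolding rect_diag_def by auto

lemma rect_diag_dims[simp]: "dim_row (rect_diag a b f) = a" "dim_col (rect_diag a b f) = b"
  unfolding rect_diag_def by auto

lemma rect_diag_index[simp]: "i < a \<Longrightarrow> j < b \<Longrightarrow> rect_diag a b f $$ (i,j) = (if i = j then f i else 0)"
  unfolding rect_diag_def by auto

lemma rect_diag_mult:
  "rect_diag a b f * rect_diag b c g = rect_diag a c (\<lambda>j. if j < b then f j * g j else 0)"
proof (rule eq_matI)
  fix i j assume i: "i < dim_row (rect_diag a c (\<lambda>j. if j < b then f j * g j else 0))"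
    and j: "j < dim_col (rect_diag a c (\<lambda>j. if j < b then f j * g j else 0))"
  have "(rect_diag a b f * rect_diag b c g) $$ (i, j) = (\<Sum>l\<in>{0..<b}. rect_diag a b f $$ (i,l) * rect_diag b c g $$ (l,j))"
    using i j by (simp add: scalar_prod_def)
  also have "\<dots> = (\<Sum>l\<in>{0..<b}. if l = i then (if i = j then f i * g i else 0) else 0)"
    using i j by (intro sum.cong) auto
  also have "\<dots> = (if i < b then (if i = j then f i * g i else 0) else 0)" by (simp add: sum.delta')
  finally show "(rect_diag a b f * rect_diag b c g) $$ (i, j) = rect_diag a c (\<lambda>j. if j < b then f j * g j else 0) $$ (i, j)"
    using i j by auto
qed auto

lemma rect_diag_transpose: "transpose_mat (rect_diag a b f) = rect_diag b a f"
  by (rule eq_matI) auto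

lemma rect_diag_cong: "(\<And>j. j < a \<Longrightarrow> j < b \<Longrightarrow> f j = g j) \<Longrightarrow> rect_diag a b f = rect_diag a b g"
  by (rule eq_matI) auto

lemma one_rect_diag: "1\<^sub>m n = rect_diag n n (\<lambda>_. 1)"
  by (rule eq_matI) auto

lemma rect_diag_pow: "rect_diag n n f ^\<^sub>m q = rect_diag n n (\<lambda>j. f j ^ q)"
proof (induction q)
  case 0 then show ?case using one_rect_diag by simp
next
  case (Suc q)
  have "rect_diag n n f ^\<^sub>m Suc q = rect_diag n n (\<lambda>j. f j ^ q) * rect_diag n n f" using Suc by simp
  also have "\<dots> = rect_diag n n (\<lambda>j. f j ^ Suc q)" unfolding rect_diag_mult
    by (rule rect_diag_cong) auto
  finally show ?case .
qed

lemma rect_diag_mult_vec: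
  assumes "w \<in> carrier_vec b" "j < a" "j < b"
  shows "(rect_diag a b f *\<^sub>v w) $ j = f j * w $ j"
proof -
  have "(rect_diag a b f *\<^sub>v w) $ j = (\<Sum>l\<in>{0..<b}. rect_diag a b f $$ (j,l) * w $ l)"
    using assms by (simp add: scalar_prod_def)
  also have "\<dots> = (\<Sum>l\<in>{0..<b}. if l = j then f j * w $ j else 0)"
    using assms by (intro sum.cong) auto
  also have "\<dots> = f j * w $ j" using assms by (simp add: sum.delta')
  finally show ?thesis .
qed

lemma sandwich:
  fixes P D1 Om D2 R :: "real mat"
  assumes P: "P \<in> carrier_mat a a" and D1: "D1 \<in> carrier_mat a b" and O: "Om \<in> carrier_mat b b"
    and OO: "transpose_mat Om * Om = 1\<^sub>m b" and D2: "D2 \<in> carrier_mat b c" and R: "R \<in> carrier_mat c c'"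
  shows "(P * D1 * transpose_mat Om) * (Om * D2 * R) = P * (D1 * D2) * R"
proof -
  have Ot: "transpose_mat Om \<in> carrier_mat b b" using O by simp
  have PD1: "P * D1 \<in> carrier_mat a b" using P D1 by simp
  have OD2: "Om * D2 \<in> carrier_mat b c" using O D2 by simp
  have OD2R: "Om * D2 * R \<in> carrier_mat b c'" using OD2 R by simp
  have "(P * D1 * transpose_mat Om) * (Om * D2 * R) = (P * D1) * (transpose_mat Om * (Om * D2 * R))"
    by (rule assoc_mult_mat[OF PD1 Ot OD2R])
  also have "transpose_mat Om * (Om * D2 * R) = (transpose_mat Om * (Om * D2)) * R"
    by (rule assoc_mult_mat[OF Ot OD2 R, symmetric])
  also have "transpose_mat Om * (Om * D2) = (transpose_mat Om * Om) * D2"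
    by (rule assoc_mult_mat[OF Ot O D2, symmetric])
  also have "\<dots> = D2" using OO left_mult_one_mat[OF D2] by simp
  also have "(P * D1) * (D2 * R) = ((P * D1) * D2) * R"
    by (rule assoc_mult_mat[OF PD1 D2 R, symmetric])
  also have "(P * D1) * D2 = P * (D1 * D2)"
    by (rule assoc_mult_mat[OF P D1 D2])
  finally show ?thesis .
qed





lemma vnorm_le_sum_abs: "vnorm v \<le> (\<Sum>i\<in>{0..<dim_vec v}. \<bar>v $ i\<bar>)"
proof -
  define S where "S = (\<Sum>i\<in>{0..<dim_vec v}. \<bar>v $ i\<bar>)"
  have S0: "S \<ge> 0" unfolding S_def by (intro sum_nonneg) auto
  have "v \<bullet> v = (\<Sum>i\<in>{0..<dim_vec v}. \<bar>v $ i\<bar> * \<bar>v $ i\<bar>)" unfolding scalar_prod_def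
    by (intro sum.cong) (auto simp: abs_mult_self_eq)
  also have "\<dots> \<le> (\<Sum>i\<in>{0..<dim_vec v}. \<bar>v $ i\<bar> * S)"
  proof (intro sum_mono mult_left_mono)
    fix i assume "i \<in> {0..<dim_vec v}"
    thus "\<bar>v $ i\<bar> \<le> S" unfolding S_def by (intro member_le_sum) auto
  qed auto
  also have "\<dots> = S * S" unfolding S_def by (simp add: sum_distrib_right)
  finally have "v \<bullet> v \<le> S^2" by (simp add: power2_eq_square)
  hence "sqrt (v \<bullet> v) \<le> sqrt (S^2)" by (rule real_sqrt_le_mono)
  thus ?thesis unfolding vnorm_def S_def[symmetric] using S0 by simp
qed

lemma unit_comp_le: assumes "vnorm x = 1" "j < dim_vec x" shows "\<bar>x $ j\<bar> \<le> 1"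
proof -
  have xx: "x \<bullet> x = 1" using assms(1) sprod_self_nonneg[of x] unfolding vnorm_def by simp
  have "x $ j * x $ j \<le> (\<Sum>i\<in>{0..<dim_vec x}. x $ i * x $ i)" using assms(2)
    by (intro member_le_sum) auto
  hence "(x $ j)^2 \<le> 1" using xx unfolding scalar_prod_def by (simp add: power2_eq_square)
  thus ?thesis by (simp add: abs_square_le_1)
qed

lemma spec_norm_bound:
  assumes F: "F \<in> carrier_mat a b" and x: "x \<in> carrier_vec b" and nx: "vnorm x = 1"
  shows "vnorm (F *\<^sub>v x) \<le> spec_norm F"
proof -
  define B where "B = (\<Sum>i\<in>{0..<a}. \<Sum>j\<in>{0..<b}. \<bar>F $$ (i,j)\<bar>)"
  have bnd: "vnorm (F *\<^sub>v y) \<le> B" if y: "y \<in> carrier_vec b" "vnorm y = 1" for y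
  proof -
    have "vnorm (F *\<^sub>v y) \<le> (\<Sum>i\<in>{0..<a}. \<bar>(F *\<^sub>v y) $ i\<bar>)" using vnorm_le_sum_abs[of "F *\<^sub>v y"] F by simp
    also have "\<dots> \<le> B" unfolding B_def
    proof (intro sum_mono)
      fix i assume i: "i \<in> {0..<a}"
      have "\<bar>(F *\<^sub>v y) $ i\<bar> = \<bar>\<Sum>j\<in>{0..<b}. F $$ (i,j) * y $ j\<bar>" using i F y by (simp add: scalar_prod_def)
      also have "\<dots> \<le> (\<Sum>j\<in>{0..<b}. \<bar>F $$ (i,j) * y $ j\<bar>)" by (rule sum_abs)
      also have "\<dots> \<le> (\<Sum>j\<in>{0..<b}. \<bar>F $$ (i,j)\<bar>)"
      proof (intro sum_mono)
        fix j assume j: "j \<in> {0..<b}"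
        have "\<bar>y $ j\<bar> \<le> 1" using unit_comp_le[OF y(2)] y(1) j by auto
        thus "\<bar>F $$ (i,j) * y $ j\<bar> \<le> \<bar>F $$ (i,j)\<bar>" by (simp add: abs_mult mult_left_le)
      qed
      finally show "\<bar>(F *\<^sub>v y) $ i\<bar> \<le> (\<Sum>j\<in>{0..<b}. \<bar>F $$ (i,j)\<bar>)" .
    qed
    finally show ?thesis .
  qed
  show ?thesis unfolding spec_norm_def
  proof (rule cSup_upper)
    show "vnorm (F *\<^sub>v x) \<in> {vnorm (F *\<^sub>v x) |x. x \<in> carrier_vec (dim_col F) \<and> vnorm x = 1}"
      using x nx F by auto
    show "bdd_above {vnorm (F *\<^sub>v x) |x. x \<in> carrier_vec (dim_col F) \<and> vnorm x = 1}"
      unfolding bdd_above_def using bnd F by auto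
  qed
qed

lemma final_ineq:
  fixes si sk gam t H :: real and a :: nat
  assumes si: "0 < si" and sk: "0 \<le> sk" and g0: "0 \<le> gam" and gd: "gam \<le> sk / si" and t: "0 \<le> t"
    and H0: "0 \<le> H" and HK: "H \<le> (sk ^ a * t)^2"
  shows "sqrt (H / ((si ^ a)^2 + H)) \<le> (sk / si) ^ a * t / sqrt (1 + gam ^ (2*a) * t^2)"
proof -
  define s where "s = si ^ a"
  define T where "T = (sk / si) ^ a * t"
  define G where "G = gam ^ a * t"
  have s0: "s > 0" unfolding s_def using si by simp
  have T0: "T \<ge> 0" unfolding T_def using si sk t by simp
  have G0: "G \<ge> 0" unfolding G_def using g0 t by simp
  have GT: "G \<le> T" unfolding G_def T_def using g0 gd t by (intro mult_right_mono power_mono) auto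
  have K: "sk ^ a * t = s * T" unfolding s_def T_def using si by (simp add: power_divide)
  define K2 where "K2 = (s * T)^2"
  have HK': "H \<le> K2" using HK K unfolding K2_def by simp
  have "H / (s^2 + H) \<le> K2 / (s^2 + K2)"
  proof -
    have p1: "s^2 + H > 0" using s0 H0 by (simp add: add_pos_nonneg)
    have p2: "s^2 + K2 > 0" using s0 H0 HK' by (simp add: add_pos_nonneg)
    have "H * (s^2 + K2) \<le> K2 * (s^2 + H)" using HK' s0 by (simp add: algebra_simps mult_right_mono)
    thus ?thesis using p1 p2 by (simp add: divide_simps)
  qed
  also have "K2 / (s^2 + K2) = (T^2 * s^2) / ((1 + T^2) * s^2)" unfolding K2_def
    by (simp add: power_mult_distrib algebra_simps)
  also have "\<dots> = T^2 / (1 + T^2)" using s0 by simp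
  also have "\<dots> \<le> T^2 / (1 + G^2)"
    using G0 GT T0 by (intro divide_left_mono add_left_mono power_mono) (auto simp: add_pos_nonneg)
  finally have "sqrt (H / (s^2 + H)) \<le> sqrt (T^2 / (1 + G^2))" by simp
  also have "\<dots> = T / sqrt (1 + G^2)" using T0 by (simp add: real_sqrt_divide)
  finally have fin: "sqrt (H / (s^2 + H)) \<le> T / sqrt (1 + G^2)" .
  have "(gam ^ a)^2 = gam ^ (2*a)" by (metis power_mult mult.commute)
  then show ?thesis using fin unfolding s_def T_def G_def by (simp add: power_mult_distrib)
qed




lemma tr_first_cols:
  assumes U: "U \<in> carrier_mat m m" and km: "k \<le> m" and v: "v \<in> carrier_vec m" and j: "j < k"
  shows "(transpose_mat (first_cols k U) *\<^sub>v v) $ j = (transpose_mat U *\<^sub>v v) $ j"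
proof -
  have "col (first_cols k U) j = col U j" using U km j unfolding first_cols_def by (intro eq_vecI) auto
  thus ?thesis using U km j unfolding first_cols_def by simp
qed

lemma tr_last_cols:
  assumes U: "U \<in> carrier_mat m m" and v: "v \<in> carrier_vec m" and j: "k \<le> j" "j < m"
  shows "(transpose_mat (last_cols k U) *\<^sub>v v) $ (j - k) = (transpose_mat U *\<^sub>v v) $ j"
proof -
  have "col (last_cols k U) (j - k) = col U j" using U j unfolding last_cols_def by (intro eq_vecI) auto
  thus ?thesis using U j unfolding last_cols_def by simp
qed

lemma angle_final:
  fixes Om W U \<Phi> D :: "real mat" and f :: "nat \<Rightarrow> real"
  assumes Om: "Om \<in> carrier_mat r r" "transpose_mat Om * Om = 1\<^sub>m r" "Om * transpose_mat Om = 1\<^sub>m r"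
    and W: "W \<in> carrier_mat r c" and orth: "orthonormal_cols W"
    and rm: "r \<le> m" and kr: "k \<le> r" and i: "i < k"
    and U: "U \<in> carrier_mat m m" and Phi: "\<Phi> \<in> carrier_mat m d"
    and pinv: "(transpose_mat (first_cols k U) * \<Phi>) * pinv (transpose_mat (first_cols k U) * \<Phi>) = 1\<^sub>m k"
      "pinv (transpose_mat (first_cols k U) * \<Phi>) \<in> carrier_mat d k"
    and D: "D = rect_diag r m f"
    and inW: "\<And>z. z \<in> carrier_vec d \<Longrightarrow> Om *\<^sub>v (D *\<^sub>v (transpose_mat U *\<^sub>v (\<Phi> *\<^sub>v z))) \<in> col_space W"
    and si: "0 < si" and sk: "0 \<le> sk" and g0: "0 \<le> gam" and gd: "gam \<le> sk / si"
    and fi: "f i = si ^ a" and fj: "\<And>j. j < r \<Longrightarrow> k \<le> j \<Longrightarrow> \<bar>f j\<bar> \<le> sk ^ a"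
  shows "sin_angle (col_space W) (col Om i) \<le>
    (sk / si) ^ a * spec_norm ((transpose_mat (last_cols k U) * \<Phi>) * pinv (transpose_mat (first_cols k U) * \<Phi>))
     / sqrt (1 + gam ^ (2*a) * (spec_norm ((transpose_mat (last_cols k U) * \<Phi>) * pinv (transpose_mat (first_cols k U) * \<Phi>)))^2)"
proof -
  define Phi1 where "Phi1 = transpose_mat (first_cols k U) * \<Phi>"
  define Phi2 where "Phi2 = transpose_mat (last_cols k U) * \<Phi>"
  define X where "X = pinv Phi1"
  define t where "t = spec_norm (Phi2 * X)"
  have Xc: "X \<in> carrier_mat d k" using pinv unfolding X_def Phi1_def by auto
  have P1X: "Phi1 * X = 1\<^sub>m k" using pinv unfolding X_def Phi1_def by auto
  have FUc: "transpose_mat (first_cols k U) \<in> carrier_mat k m" using U unfolding first_cols_def by auto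
  have LUc: "transpose_mat (last_cols k U) \<in> carrier_mat (m - k) m" using U unfolding last_cols_def by auto
  have P1c: "Phi1 \<in> carrier_mat k d" unfolding Phi1_def using FUc Phi by auto
  have P2c: "Phi2 \<in> carrier_mat (m - k) d" unfolding Phi2_def using LUc Phi by auto
  define e where "e = (unit_vec k i :: real vec)"
  have ec: "e \<in> carrier_vec k" unfolding e_def by simp
  have ne: "vnorm e = 1" unfolding vnorm_def e_def using i by simp
  define z where "z = X *\<^sub>v e"
  have zc: "z \<in> carrier_vec d" unfolding z_def using Xc ec by auto
  define w where "w = transpose_mat U *\<^sub>v (\<Phi> *\<^sub>v z)"
  have Phiz: "\<Phi> *\<^sub>v z \<in> carrier_vec m" using Phi zc by auto
  have wc: "w \<in> carrier_vec m" unfolding w_def using U Phiz by auto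
  have Dc: "D \<in> carrier_mat r m" unfolding D by simp
  define y where "y = Om *\<^sub>v (D *\<^sub>v w)"
  have yW: "y \<in> col_space W" unfolding y_def w_def using inW zc by simp
  have Dw: "D *\<^sub>v w \<in> carrier_vec r" using Dc wc by auto
  have g: "transpose_mat Om *\<^sub>v y = D *\<^sub>v w"
  proof -
    have "transpose_mat Om *\<^sub>v y = (transpose_mat Om * Om) *\<^sub>v (D *\<^sub>v w)" unfolding y_def
      using Om Dw by (subst assoc_mult_mat_vec[of _ r r]) auto
    thus ?thesis using Om Dw by simp
  qed
  have gj: "(transpose_mat Om *\<^sub>v y) $ j = f j * w $ j" if "j < r" for j
    unfolding g D using rect_diag_mult_vec[OF wc[unfolded D] that] that rm wc by (simp add: D)
  have Phi1z: "Phi1 *\<^sub>v z = e"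
  proof -
    have "Phi1 *\<^sub>v z = (Phi1 * X) *\<^sub>v e" unfolding z_def using P1c Xc ec by (subst assoc_mult_mat_vec) auto
    thus ?thesis using P1X ec by simp
  qed
  have wlow: "w $ j = e $ j" if "j < k" for j
  proof -
    have "(Phi1 *\<^sub>v z) $ j = (transpose_mat (first_cols k U) *\<^sub>v (\<Phi> *\<^sub>v z)) $ j"
      unfolding Phi1_def using FUc Phi zc by (subst assoc_mult_mat_vec) auto
    also have "\<dots> = w $ j" unfolding w_def using tr_first_cols[OF U _ Phiz that] that kr rm by simp
    finally show ?thesis using Phi1z by simp
  qed
  have whigh: "w $ j = (Phi2 *\<^sub>v z) $ (j - k)" if "k \<le> j" "j < m" for j
  proof -
    have "(Phi2 *\<^sub>v z) $ (j - k) = (transpose_mat (last_cols k U) *\<^sub>v (\<Phi> *\<^sub>v z)) $ (j - k)"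
      unfolding Phi2_def using LUc Phi zc by (subst assoc_mult_mat_vec) auto
    also have "\<dots> = w $ j" unfolding w_def using tr_last_cols[OF U Phiz that] by simp
    finally show ?thesis by simp
  qed
  have ir: "i < r" using i kr by simp
  have gi: "(transpose_mat Om *\<^sub>v y) $ i = si ^ a"
    using gj[OF ir] wlow[OF i] fi i unfolding e_def by simp
  have s0: "si ^ a > 0" using si by simp
  define H where "H = (\<Sum>j\<in>{0..<r}-{i}. ((transpose_mat Om *\<^sub>v y) $ j)^2)"
  have core: "sin_angle (col_space W) (col Om i) \<le> sqrt (H / ((si ^ a)^2 + H))"
    unfolding H_def by (rule angle_core[OF Om W orth ir yW s0 gi])
  have H0: "H \<ge> 0" unfolding H_def by (intro sum_nonneg) auto
  have P2z: "Phi2 *\<^sub>v z = (Phi2 * X) *\<^sub>v e" unfolding z_def using P2c Xc ec by (subst assoc_mult_mat_vec) auto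
  have nP2z: "vnorm (Phi2 *\<^sub>v z) \<le> t" unfolding P2z t_def
    using spec_norm_bound[OF _ ec ne, of "Phi2 * X" "m - k"] P2c Xc by auto
  have t0: "t \<ge> 0" using nP2z vnorm_nonneg[of "Phi2 *\<^sub>v z"] by linarith
  have HK: "H \<le> (sk ^ a * t)^2"
  proof -
    have split: "{0..<r}-{i} = ({0..<k}-{i}) \<union> {k..<r}" using kr i by auto
    have "H = (\<Sum>j\<in>{0..<k}-{i}. ((transpose_mat Om *\<^sub>v y) $ j)^2) + (\<Sum>j\<in>{k..<r}. ((transpose_mat Om *\<^sub>v y) $ j)^2)"
      unfolding H_def split by (subst sum.union_disjoint) auto
    also have "(\<Sum>j\<in>{0..<k}-{i}. ((transpose_mat Om *\<^sub>v y) $ j)^2) = 0"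
    proof (intro sum.neutral ballI)
      fix j assume j: "j \<in> {0..<k}-{i}"
      hence "j < r" "j < k" "j \<noteq> i" using kr by auto
      thus "((transpose_mat Om *\<^sub>v y) $ j)^2 = 0" using gj wlow i unfolding e_def by simp
    qed
    also have "(\<Sum>j\<in>{k..<r}. ((transpose_mat Om *\<^sub>v y) $ j)^2) \<le> (\<Sum>j\<in>{k..<r}. (sk ^ a)^2 * (w $ j)^2)"
    proof (intro sum_mono)
      fix j assume j: "j \<in> {k..<r}"
      have "\<bar>f j\<bar> \<le> sk ^ a" using fj j by auto
      hence "(f j)^2 \<le> (sk ^ a)^2" by (metis abs_ge_zero power2_abs power_mono)
      hence "(f j)^2 * (w $ j)^2 \<le> (sk ^ a)^2 * (w $ j)^2" by (intro mult_right_mono) auto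
      thus "((transpose_mat Om *\<^sub>v y) $ j)^2 \<le> (sk ^ a)^2 * (w $ j)^2" using gj j by (simp add: power_mult_distrib)
    qed
    also have "\<dots> = (sk ^ a)^2 * (\<Sum>j\<in>{k..<r}. (w $ j)^2)" by (simp add: sum_distrib_left)
    also have "(\<Sum>j\<in>{k..<r}. (w $ j)^2) \<le> (\<Sum>j\<in>{k..<m}. (w $ j)^2)"
      using rm by (intro sum_mono2) auto
    also have "(\<Sum>j\<in>{k..<m}. (w $ j)^2) = (\<Sum>l\<in>{0..<m-k}. ((Phi2 *\<^sub>v z) $ l)^2)"
    proof -
      have ivl: "{k..<m} = {0 + k..<(m - k) + k}" using kr rm by auto
      have "(\<Sum>j\<in>{k..<m}. (w $ j)^2) = (\<Sum>l\<in>{0..<m-k}. (w $ (l + k))^2)"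
        unfolding ivl by (rule sum.shift_bounds_nat_ivl)
      also have "\<dots> = (\<Sum>l\<in>{0..<m-k}. ((Phi2 *\<^sub>v z) $ l)^2)"
        by (intro sum.cong) (auto simp: whigh)
      finally show ?thesis .
    qed
    also have "\<dots> = (vnorm (Phi2 *\<^sub>v z))^2" unfolding vnorm_sq scalar_prod_def using P2c
      by (simp add: power2_eq_square)
    also have "\<dots> \<le> t^2" using nP2z vnorm_nonneg by (intro power_mono) auto
    finally show ?thesis by (simp add: power_mult_distrib mult_left_mono)
  qed
  have "sqrt (H / ((si ^ a)^2 + H)) \<le> (sk / si) ^ a * t / sqrt (1 + gam ^ (2*a) * t^2)"
    by (rule final_ineq[OF si sk g0 gd t0 H0 HK])
  with core show ?thesis unfolding t_def X_def Phi1_def Phi2_def by simp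
qed



theorem theorem4:
  fixes A U V \<Phi> Pbar Q R Ptil Rtil P L :: "real mat"
    and \<sigma> :: "nat \<Rightarrow> real"
    and m n k p d q :: nat
  assumes dims: "n \<le> m" "1 \<le> k" "1 \<le> p" "d = k + p" "d < n"
    and A_carr: "A \<in> carrier_mat m n"
    (* full SVD A = U Sigma V^T; sigma i (0-based) is sigma_{i+1} *)
    and U_carr: "U \<in> carrier_mat m m" and U_orth: "orthonormal_cols U"
    and V_carr: "V \<in> carrier_mat n n" and V_orth: "orthonormal_cols V"
    and sv_mono: "\<And>i j. i \<le> j \<Longrightarrow> j < n \<Longrightarrow> \<sigma> j \<le> \<sigma> i"
    and sv_nonneg: "\<sigma> (n - 1) \<ge> 0"
    and svd: "A = U * rect_diag m n \<sigma> * transpose_mat V"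
    and sk_pos: "\<sigma> (k - 1) > 0"
    (* RU-QLP *)
    and Phi_carr: "\<Phi> \<in> carrier_mat m d"
    and Pbar_carr: "Pbar \<in> carrier_mat n d" and Pbar_orth: "orthonormal_cols Pbar"
    and Pbar_range: "col_space Pbar =
          col_space ((transpose_mat A * A) ^\<^sub>m q * transpose_mat A * \<Phi>)"
    and Q_carr: "Q \<in> carrier_mat m d" and Q_orth: "orthonormal_cols Q"
    and R_carr: "R \<in> carrier_mat d d" and R_upper: "upper_triangular R"
    and QR: "A * Pbar = Q * R"
    and Ptil_carr: "Ptil \<in> carrier_mat d d" and Ptil_orth: "orthonormal_cols Ptil"
    and Rtil_carr: "Rtil \<in> carrier_mat d d" and Rtil_upper: "upper_triangular Rtil"
    and QR2: "transpose_mat R = Ptil * Rtil"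
    and P_def: "P = Pbar * Ptil"
    and L_def: "L = transpose_mat Rtil"
    (* rank of Phi_1-hat is k *)
    and rank_Phi1: "vec_space.rank k (transpose_mat (first_cols k U) * \<Phi>) = k"
  shows "\<forall>i < k.
     (let Phi1 = transpose_mat (first_cols k U) * \<Phi>;
          Phi2 = transpose_mat (last_cols k U) * \<Phi>;
          t = spec_norm (Phi2 * pinv Phi1);
          \<delta> = \<sigma> k / \<sigma> i;
          \<gamma> = \<sigma> (n - 1) / \<sigma> 0
      in sin_angle (col_space Q) (col U i)
           \<le> \<delta> ^ (2*q+2) * t / sqrt (1 + \<gamma> ^ (4*q+4) * t\<^sup>2)
       \<and> sin_angle (col_space P) (col V i)
           \<le> \<delta> ^ (2*q+1) * t / sqrt (1 + \<gamma> ^ (4*q+2) * t\<^sup>2))"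
proof (intro allI impI)
  fix i assume i: "i < k"
  have kn: "k < n" using dims by simp
  have km: "k \<le> m" using kn dims by simp
  have sig0: "0 \<le> \<sigma> j" if "j < n" for j
  proof -
    have "j \<le> n - 1" "n - 1 < n" using that by arith+
    hence "\<sigma> (n - 1) \<le> \<sigma> j" using sv_mono by blast
    thus ?thesis using sv_nonneg by linarith
  qed
  have iln: "i < n" using i kn by arith
  have si: "0 < \<sigma> i"
  proof -
    have "i \<le> k - 1" "k - 1 < n" using i kn by arith+
    hence "\<sigma> (k - 1) \<le> \<sigma> i" using sv_mono by blast
    thus ?thesis using sk_pos by linarith
  qed
  have sk: "0 \<le> \<sigma> k" using sig0 kn by simp
  have si0: "\<sigma> i \<le> \<sigma> 0" using sv_mono[of 0 i] iln by simp
  have s00: "0 < \<sigma> 0" using si0 si by linarith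
  have gam0: "0 \<le> \<sigma> (n - 1) / \<sigma> 0" using sv_nonneg s00 by simp
  have gamd: "\<sigma> (n - 1) / \<sigma> 0 \<le> \<sigma> k / \<sigma> i"
  proof -
    have "\<sigma> i \<le> \<sigma> 0" using si0 .
    hence "\<sigma> (n - 1) / \<sigma> 0 \<le> \<sigma> (n - 1) / \<sigma> i" using sv_nonneg si by (intro divide_left_mono) auto
    also have "\<dots> \<le> \<sigma> k / \<sigma> i"
    proof -
      have "k \<le> n - 1" "n - 1 < n" using kn by arith+
      hence "\<sigma> (n - 1) \<le> \<sigma> k" using sv_mono by blast
      thus ?thesis using si by (intro divide_right_mono) auto
    qed
    finally show ?thesis .
  qed
  have UtU: "transpose_mat U * U = 1\<^sub>m m" using U_orth U_carr unfolding orthonormal_cols_def by simp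
  have VtV: "transpose_mat V * V = 1\<^sub>m n" using V_orth V_carr unfolding orthonormal_cols_def by simp
  have UUt: "U * transpose_mat U = 1\<^sub>m m"
    by (rule mat_mult_left_right_inverse[OF _ U_carr UtU]) (use U_carr in simp)
  have VVt: "V * transpose_mat V = 1\<^sub>m n"
    by (rule mat_mult_left_right_inverse[OF _ V_carr VtV]) (use V_carr in simp)
  have PtPt: "transpose_mat Ptil * Ptil = 1\<^sub>m d" using Ptil_orth Ptil_carr unfolding orthonormal_cols_def by simp
  have PPt: "Ptil * transpose_mat Ptil = 1\<^sub>m d"
    by (rule mat_mult_left_right_inverse[OF _ Ptil_carr PtPt]) (use Ptil_carr in simp)
  have PbPb: "transpose_mat Pbar * Pbar = 1\<^sub>m d" using Pbar_orth Pbar_carr unfolding orthonormal_cols_def by simp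
  have Ut: "transpose_mat U \<in> carrier_mat m m" and Vt: "transpose_mat V \<in> carrier_mat n n"
    using U_carr V_carr by auto
  define Phi1 where "Phi1 = transpose_mat (first_cols k U) * \<Phi>"
  have FUc: "transpose_mat (first_cols k U) \<in> carrier_mat k m" using U_carr unfolding first_cols_def by auto
  have P1c: "Phi1 \<in> carrier_mat k d" unfolding Phi1_def using FUc Phi_carr by auto
  have surj: "\<exists>x \<in> carrier_vec d. Phi1 *\<^sub>v x = y" if "y \<in> carrier_vec k" for y
    using surj_of_rank[OF P1c _ that] rank_Phi1 unfolding Phi1_def by simp
  have pinvP: "Phi1 * pinv Phi1 = 1\<^sub>m k \<and> pinv Phi1 \<in> carrier_mat d k"
    by (rule pinv_right_inverse[OF P1c surj])
  define S where "S = rect_diag m n \<sigma>"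
  define St where "St = rect_diag n m \<sigma>"
  have Sc: "S \<in> carrier_mat m n" and Stc: "St \<in> carrier_mat n m" unfolding S_def St_def by auto
  have AS: "A = U * S * transpose_mat V" using svd unfolding S_def .
  have At: "transpose_mat A = V * St * transpose_mat U"
  proof -
    have "transpose_mat A = transpose_mat (transpose_mat V) * transpose_mat (U * S)"
      unfolding AS using U_carr Sc Vt by (subst transpose_mult[of _ m n]) auto
    also have "transpose_mat (U * S) = transpose_mat S * transpose_mat U"
      using U_carr Sc by (rule transpose_mult)
    also have "transpose_mat S = St" unfolding S_def St_def by (rule rect_diag_transpose)
    finally show ?thesis using V_carr Stc Ut by (simp add: assoc_mult_mat[of _ n n _ m _ m])
  qed
  define E where "E = St * S"
  have Ec: "E \<in> carrier_mat n n" unfolding E_def using Stc Sc by auto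
  have AtA: "transpose_mat A * A = V * E * transpose_mat V"
    unfolding At E_def by (subst AS, rule sandwich[OF V_carr Stc U_carr UtU Sc Vt])
  have pw: "(V * E * transpose_mat V) ^\<^sub>m q' = V * (E ^\<^sub>m q') * transpose_mat V" for q'
  proof (induction q')
    case 0
    have "E ^\<^sub>m 0 = 1\<^sub>m n" using Ec by simp
    hence "V * (E ^\<^sub>m 0) * transpose_mat V = V * transpose_mat V" using right_mult_one_mat[OF V_carr] by simp
    also have "\<dots> = 1\<^sub>m n" by (rule VVt)
    also have "1\<^sub>m n = (V * E * transpose_mat V) ^\<^sub>m 0"
    proof -
      have "dim_row (V * E * transpose_mat V) = n" using V_carr by simp
      thus ?thesis by (simp only: pow_mat.simps(1))
    qed
    finally show ?case by (rule sym)
  next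
    case (Suc q')
    have Eq: "E ^\<^sub>m q' \<in> carrier_mat n n" using pow_mat_dim_square[OF Ec] by (intro carrier_matI) auto
    have "(V * E * transpose_mat V) ^\<^sub>m Suc q' = (V * E * transpose_mat V) ^\<^sub>m q' * (V * E * transpose_mat V)"
      by (rule pow_mat.simps(2))
    also have "\<dots> = (V * (E ^\<^sub>m q') * transpose_mat V) * (V * E * transpose_mat V)"
      by (simp only: Suc.IH)
    also have "\<dots> = V * ((E ^\<^sub>m q') * E) * transpose_mat V" by (rule sandwich[OF V_carr Eq V_carr VtV Ec Vt])
    also have "(E ^\<^sub>m q') * E = E ^\<^sub>m Suc q'" by (simp only: pow_mat.simps(2))
    finally show ?case .
  qed
  define Eq where "Eq = E ^\<^sub>m q"
  have Eqc: "Eq \<in> carrier_mat n n" unfolding Eq_def using pow_mat_dim_square[OF Ec] by (intro carrier_matI) auto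
  define D1 where "D1 = Eq * St"
  define D2 where "D2 = S * D1"
  have D1c: "D1 \<in> carrier_mat n m" unfolding D1_def using Eqc Stc by auto
  have D2c: "D2 \<in> carrier_mat m m" unfolding D2_def using Sc D1c by auto
  define M1 where "M1 = (transpose_mat A * A) ^\<^sub>m q * transpose_mat A"
  have M1: "M1 = V * D1 * transpose_mat U"
    unfolding M1_def AtA unfolding pw Eq_def[symmetric] unfolding At D1_def by (rule sandwich[OF V_carr Eqc V_carr VtV Stc Ut])
  have AM1: "A * M1 = U * D2 * transpose_mat U"
    unfolding M1 D2_def by (subst AS, rule sandwich[OF U_carr Sc V_carr VtV D1c Ut])
  have M1c: "M1 \<in> carrier_mat n m" unfolding M1 using V_carr D1c Ut by auto
  define f1 where "f1 = (\<lambda>j. if j < n then (if j < m then \<sigma> j * \<sigma> j else 0) ^ q * \<sigma> j else 0)"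
  define f2 where "f2 = (\<lambda>j. if j < n then \<sigma> j * f1 j else 0)"
  have D1r: "D1 = rect_diag n m f1" unfolding D1_def Eq_def E_def S_def St_def f1_def
    by (simp add: rect_diag_mult rect_diag_pow)
  have D2r: "D2 = rect_diag m m f2" unfolding D2_def D1r S_def f2_def
    by (simp add: rect_diag_mult)
  have f1v: "f1 j = \<sigma> j ^ (2*q+1)" if "j < n" for j
  proof -
    have "f1 j = (\<sigma> j * \<sigma> j) ^ q * \<sigma> j" unfolding f1_def using that dims by simp
    also have "\<dots> = \<sigma> j ^ (2*q+1)" by (simp add: power_mult power2_eq_square[symmetric])
    finally show ?thesis .
  qed
  have f2v: "f2 j = \<sigma> j ^ (2*q+2)" if "j < n" for j
    unfolding f2_def using that f1v[OF that] by simp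
  have f2z: "f2 j = 0" if "\<not> j < n" for j unfolding f2_def using that by simp
  have inPbar: "\<exists>z' \<in> carrier_vec d. M1 *\<^sub>v (\<Phi> *\<^sub>v z) = Pbar *\<^sub>v z'" if z: "z \<in> carrier_vec d" for z
  proof -
    have "M1 *\<^sub>v (\<Phi> *\<^sub>v z) = (M1 * \<Phi>) *\<^sub>v z" using M1c Phi_carr z by (subst assoc_mult_mat_vec) auto
    moreover have "(M1 * \<Phi>) *\<^sub>v z \<in> col_space (M1 * \<Phi>)" using M1c Phi_carr z by (intro col_space_mem) auto
    ultimately have "M1 *\<^sub>v (\<Phi> *\<^sub>v z) \<in> col_space Pbar" using Pbar_range unfolding M1_def by simp
    thus ?thesis unfolding col_space_def using Pbar_carr by auto
  qed
  have inQ: "U *\<^sub>v (D2 *\<^sub>v (transpose_mat U *\<^sub>v (\<Phi> *\<^sub>v z))) \<in> col_space Q" if z: "z \<in> carrier_vec d" for z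
  proof -
    have Phz: "\<Phi> *\<^sub>v z \<in> carrier_vec m" using Phi_carr z by auto
    have "U *\<^sub>v (D2 *\<^sub>v (transpose_mat U *\<^sub>v (\<Phi> *\<^sub>v z))) = (U * D2 * transpose_mat U) *\<^sub>v (\<Phi> *\<^sub>v z)"
      using U_carr D2c Ut Phz by (simp add: assoc_mult_mat_vec[of _ m m _ m])
    also have "\<dots> = (A * M1) *\<^sub>v (\<Phi> *\<^sub>v z)" using AM1 by simp
    also have "\<dots> = A *\<^sub>v (M1 *\<^sub>v (\<Phi> *\<^sub>v z))" using A_carr M1c Phz by (subst assoc_mult_mat_vec) auto
    finally have e1: "U *\<^sub>v (D2 *\<^sub>v (transpose_mat U *\<^sub>v (\<Phi> *\<^sub>v z))) = A *\<^sub>v (M1 *\<^sub>v (\<Phi> *\<^sub>v z))" .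
    obtain z' where z': "z' \<in> carrier_vec d" "M1 *\<^sub>v (\<Phi> *\<^sub>v z) = Pbar *\<^sub>v z'" using inPbar[OF z] by blast
    have "A *\<^sub>v (Pbar *\<^sub>v z') = (A * Pbar) *\<^sub>v z'" using A_carr Pbar_carr z' by (subst assoc_mult_mat_vec) auto
    also have "\<dots> = Q *\<^sub>v (R *\<^sub>v z')" unfolding QR using Q_carr R_carr z' by (subst assoc_mult_mat_vec) auto
    finally show ?thesis unfolding e1 z'(2) using Q_carr R_carr z' by (simp add: col_space_mem)
  qed
  have aQ: "sin_angle (col_space Q) (col U i) \<le>
    (\<sigma> k / \<sigma> i) ^ (2*q+2) * spec_norm ((transpose_mat (last_cols k U) * \<Phi>) * pinv (transpose_mat (first_cols k U) * \<Phi>))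
     / sqrt (1 + (\<sigma> (n - 1) / \<sigma> 0) ^ (2*(2*q+2)) * (spec_norm ((transpose_mat (last_cols k U) * \<Phi>) * pinv (transpose_mat (first_cols k U) * \<Phi>)))^2)"
  proof (rule angle_final[OF U_carr UtU UUt Q_carr Q_orth order_refl km i U_carr Phi_carr _ _ D2r inQ si sk gam0 gamd])
    show "f2 i = \<sigma> i ^ (2*q+2)" using f2v i kn by simp
    show "\<bar>f2 j\<bar> \<le> \<sigma> k ^ (2*q+2)" if "j < m" "k \<le> j" for j
    proof (cases "j < n")
      case True
      have "\<sigma> j \<le> \<sigma> k" using sv_mono[of k j] that True by simp
      hence pm: "\<sigma> j ^ (2*q+2) \<le> \<sigma> k ^ (2*q+2)" using sig0[OF True] by (intro power_mono) auto
      have "\<bar>f2 j\<bar> = \<sigma> j ^ (2*q+2)" using f2v[OF True] sig0[OF True] by simp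
      thus ?thesis using pm by linarith
    next
      case False thus ?thesis using f2z sk by simp
    qed
  qed (use pinvP[unfolded Phi1_def] in auto)
  have Pc: "P \<in> carrier_mat n d" unfolding P_def using Pbar_carr Ptil_carr by auto
  have P_orth: "orthonormal_cols P"
  proof -
    have "transpose_mat P = transpose_mat Ptil * transpose_mat Pbar" unfolding P_def
      using Pbar_carr Ptil_carr by (rule transpose_mult)
    hence "transpose_mat P * P = (transpose_mat Ptil * transpose_mat Pbar) * (Pbar * Ptil)" unfolding P_def by simp
    also have "\<dots> = transpose_mat Ptil * ((transpose_mat Pbar * Pbar) * Ptil)"
      using Pbar_carr Ptil_carr by (simp add: assoc_mult_mat[of _ d n _ d _ d] assoc_mult_mat[of _ d d _ n _ d])
    also have "\<dots> = 1\<^sub>m d" using PbPb PtPt Ptil_carr by simp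
    finally show ?thesis unfolding orthonormal_cols_def using Pc by simp
  qed
  have inP: "V *\<^sub>v (D1 *\<^sub>v (transpose_mat U *\<^sub>v (\<Phi> *\<^sub>v z))) \<in> col_space P" if z: "z \<in> carrier_vec d" for z
  proof -
    have Phz: "\<Phi> *\<^sub>v z \<in> carrier_vec m" using Phi_carr z by auto
    have e1: "V *\<^sub>v (D1 *\<^sub>v (transpose_mat U *\<^sub>v (\<Phi> *\<^sub>v z))) = M1 *\<^sub>v (\<Phi> *\<^sub>v z)"
    proof -
      have VD: "V * D1 \<in> carrier_mat n m" using V_carr D1c by auto
      have "M1 *\<^sub>v (\<Phi> *\<^sub>v z) = (V * D1) *\<^sub>v (transpose_mat U *\<^sub>v (\<Phi> *\<^sub>v z))"
        unfolding M1 by (rule assoc_mult_mat_vec[OF VD Ut Phz])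
      also have "\<dots> = V *\<^sub>v (D1 *\<^sub>v (transpose_mat U *\<^sub>v (\<Phi> *\<^sub>v z)))"
        by (rule assoc_mult_mat_vec[OF V_carr D1c]) (use Ut Phz in auto)
      finally show ?thesis by simp
    qed
    obtain z' where z': "z' \<in> carrier_vec d" "M1 *\<^sub>v (\<Phi> *\<^sub>v z) = Pbar *\<^sub>v z'" using inPbar[OF z] by blast
    have "Pbar *\<^sub>v z' = Pbar *\<^sub>v ((Ptil * transpose_mat Ptil) *\<^sub>v z')" using PPt z' by simp
    also have "\<dots> = P *\<^sub>v (transpose_mat Ptil *\<^sub>v z')" unfolding P_def using Pbar_carr Ptil_carr z'
      by (simp add: assoc_mult_mat_vec[of _ n d _ d])
    finally show ?thesis unfolding e1 z'(2) using Pc Ptil_carr z' by (simp add: col_space_mem)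
  qed
  have aP: "sin_angle (col_space P) (col V i) \<le>
    (\<sigma> k / \<sigma> i) ^ (2*q+1) * spec_norm ((transpose_mat (last_cols k U) * \<Phi>) * pinv (transpose_mat (first_cols k U) * \<Phi>))
     / sqrt (1 + (\<sigma> (n - 1) / \<sigma> 0) ^ (2*(2*q+1)) * (spec_norm ((transpose_mat (last_cols k U) * \<Phi>) * pinv (transpose_mat (first_cols k U) * \<Phi>)))^2)"
  proof (rule angle_final[OF V_carr VtV VVt Pc P_orth dims(1) less_imp_le[OF kn] i U_carr Phi_carr _ _ D1r inP si sk gam0 gamd])
    show "f1 i = \<sigma> i ^ (2*q+1)" using f1v i kn by simp
    show "\<bar>f1 j\<bar> \<le> \<sigma> k ^ (2*q+1)" if "j < n" "k \<le> j" for j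
    proof -
      have "\<sigma> j \<le> \<sigma> k" using sv_mono[of k j] that by simp
      hence pm: "\<sigma> j ^ (2*q+1) \<le> \<sigma> k ^ (2*q+1)" using sig0[OF that(1)] by (intro power_mono) auto
      have "\<bar>f1 j\<bar> = \<sigma> j ^ (2*q+1)" using f1v[OF that(1)] sig0[OF that(1)] by simp
      thus ?thesis using pm by linarith
    qed
  qed (use pinvP[unfolded Phi1_def] in auto)
  have e4: "2*(2*q+2) = 4*q+4" "2*(2*q+1) = 4*q+2" by auto
  show "let Phi1 = transpose_mat (first_cols k U) * \<Phi>;
          Phi2 = transpose_mat (last_cols k U) * \<Phi>;
          t = spec_norm (Phi2 * pinv Phi1);
          \<delta> = \<sigma> k / \<sigma> i;
          \<gamma> = \<sigma> (n - 1) / \<sigma> 0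
      in sin_angle (col_space Q) (col U i)
           \<le> \<delta> ^ (2*q+2) * t / sqrt (1 + \<gamma> ^ (4*q+4) * t\<^sup>2)
       \<and> sin_angle (col_space P) (col V i)
           \<le> \<delta> ^ (2*q+1) * t / sqrt (1 + \<gamma> ^ (4*q+2) * t\<^sup>2)"
    unfolding Let_def using aQ aP unfolding e4 by simp
qed


end
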